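(* Let $p,q$ be positive integers with $p/q\ge4$, $k=\lfloor p/q\rfloor$, $r=p-kq\ge1$, and let $G'$ be the graph constructed from a graph $G$ as in the context. Let $h$ and $h'$ be $k$-colourings of $G$ which differ on exactly one vertex $u$, and let $\eta$ be a $(p,q)$-colouring of $G'$ such that $\eta(y_i)=i$ for all $i$, the restriction of $\eta$ to $V(G)$ is $\gamma\circ h$, and every path $P_{ab}$ has the standard path colouring with respect to $\eta$. Then there exists a $(p,q)$-colouring $\eta'$ of $G'$ such that every path $P_{ab}$ has the standard path colouring with respect to $\eta'$, the restriction of $\eta'$ to $V(G)$ is $\gamma\circ h'$, and $\eta$ reconfigures to $\eta'$.
   Context: Intervals $[a,b]=\{a,a+1,\dots,b\}$ are taken modulo $p$. A $(p,q)$-colouring is a map to $\{0,\dots,p-1\}$ with $q\le|\psi(x)-\psi(y)|\le p-q$ on every edge; a $k$-colouring is a proper colouring with colours $\{0,\dots,k-1\}$; $\eta$ reconfigures to $\eta'$ if there is a sequence of $(p,q)$-colourings of $G'$ from $\eta$ to $\eta'$, consecutive ones differing on at most one vertex. Let $t$ be the smallest positive integer with $(t+1)q\equiv r\pmod p$, and $\gamma(0)=0$, $\gamma(i)=iq+r$ for $1\le i\le k-1$. $G'$ is obtained from $G$ by adding a disjoint copy of the circular clique on $y_0,\dots,y_{p-1}$ ($y_iy_j$ an edge iff $q\le|i-j|\le p-q$), and for every edge $uv$ of $G$ two new paths $P_{uv}=u\,x_0^{uv}\cdots x_t^{uv}\,v$ and $P_{vu}=v\,x_0^{vu}\cdots x_t^{vu}\,u$,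 internally disjoint from everything else and each other, where $x_0^{ab},x_t^{ab}$ are joined to all $y_j$ with $j\in[3q-1,p-q-1]$ and $x_i^{ab}$ ($1\le i\le t-1$) to all $y_j$ with $j\in[(i+3)q-1,(i-1)q]$. A path $P_{ab}$ has the standard path colouring with respect to a colouring $\eta$ (whose values on $V(G)$ lie in $\{\gamma(0),\dots,\gamma(k-1)\}$) if: when $\eta(a)=0$, $\eta(x_i^{ab})=(i+1)q\bmod p$ for $0\le i\le t$; when $\eta(b)=0$, $\eta(x_i^{ab})=iq\bmod p$ for $0\le i\le t-1$ and $\eta(x_t^{ab})=q$; when $\eta(a)\ne0\ne\eta(b)$, $\eta(x_i^{ab})=iq\bmod p$ for $0\le i\le t-1$ and $\eta(x_t^{ab})=0$. *)

theory Defs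
  imports Main
begin

definition kpar :: "nat \<Rightarrow> nat \<Rightarrow> nat" where "kpar p q = p div q"
definition rpar :: "nat \<Rightarrow> nat \<Rightarrow> nat" where "rpar p q = p - kpar p q * q"

definition tpar :: "nat \<Rightarrow> nat \<Rightarrow> nat" where
  "tpar p q = (LEAST t. 0 < t \<and> ((t + 1) * q) mod p = rpar p q mod p)"

definition gam :: "nat \<Rightarrow> nat \<Rightarrow> nat \<Rightarrow> nat" where
  "gam p q i = (if i = 0 then 0 else i * q + rpar p q)"

text \<open>Cyclic interval [a,b] = {a, a+1, ..., b} taken modulo p.\<close>
definition cint :: "nat \<Rightarrow> int \<Rightarrow> int \<Rightarrow> nat set" where
  "cint p a b = {nat ((a + j) mod int p) | j. 0 \<le> j \<and> j \<le> (b - a) mod int p}"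

text \<open>Vertices of G': original vertices, clique vertices y_i, path vertices x_i^{ab}.\<close>
datatype 'v gvert = Orig 'v | Yv nat | Xv 'v 'v nat

definition Gvert :: "nat \<Rightarrow> nat \<Rightarrow> 'v set \<Rightarrow> ('v \<times> 'v) set \<Rightarrow> 'v gvert set" where
  "Gvert p q V E = Orig ` V \<union> Yv ` {0..<p} \<union> {Xv a b i | a b i. (a, b) \<in> E \<and> i \<le> tpar p q}"

definition Garc :: "nat \<Rightarrow> nat \<Rightarrow> 'v set \<Rightarrow> ('v \<times> 'v) set \<Rightarrow> 'v gvert \<Rightarrow> 'v gvert \<Rightarrow> bool" where
  "Garc p q V E x y \<longleftrightarrow>
     (\<exists>u v. x = Orig u \<and> y = Orig v \<and> (u, v) \<in> E)
   \<or> (\<exists>i j. x = Yv i \<and> y = Yv j \<and> i < p \<and> j < p \<and>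
        int q \<le> \<bar>int i - int j\<bar> \<and> \<bar>int i - int j\<bar> \<le> int p - int q)
   \<or> (\<exists>a b. (a, b) \<in> E \<and> x = Orig a \<and> y = Xv a b 0)
   \<or> (\<exists>a b i. (a, b) \<in> E \<and> i < tpar p q \<and> x = Xv a b i \<and> y = Xv a b (Suc i))
   \<or> (\<exists>a b. (a, b) \<in> E \<and> x = Xv a b (tpar p q) \<and> y = Orig b)
   \<or> (\<exists>a b j. (a, b) \<in> E \<and> (x = Xv a b 0 \<or> x = Xv a b (tpar p q)) \<and> y = Yv j \<and>
        j \<in> cint p (3 * int q - 1) (int p - int q - 1))
   \<or> (\<exists>a b i j. (a, b) \<in> E \<and> 1 \<le> i \<and> i \<le> tpar p q - 1 \<and> x = Xv a b i \<and> y = Yv j \<and>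
        j \<in> cint p ((int i + 3) * int q - 1) ((int i - 1) * int q))"

definition Gadj :: "nat \<Rightarrow> nat \<Rightarrow> 'v set \<Rightarrow> ('v \<times> 'v) set \<Rightarrow> 'v gvert \<Rightarrow> 'v gvert \<Rightarrow> bool" where
  "Gadj p q V E x y \<longleftrightarrow> Garc p q V E x y \<or> Garc p q V E y x"

definition pq_col :: "nat \<Rightarrow> nat \<Rightarrow> 'v set \<Rightarrow> ('v \<times> 'v) set \<Rightarrow> ('v gvert \<Rightarrow> nat) \<Rightarrow> bool" where
  "pq_col p q V E c \<longleftrightarrow>
     (\<forall>x \<in> Gvert p q V E. c x < p) \<and>
     (\<forall>x \<in> Gvert p q V E. \<forall>y \<in> Gvert p q V E. Gadj p q V E x y \<longrightarrow>
        int q \<le> \<bar>int (c x) - int (c y)\<bar> \<and> \<bar>int (c x) - int (c y)\<bar> \<le> int p - int q)"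

definition k_col :: "nat \<Rightarrow> 'v set \<Rightarrow> ('v \<times> 'v) set \<Rightarrow> ('v \<Rightarrow> nat) \<Rightarrow> bool" where
  "k_col k V E h \<longleftrightarrow> (\<forall>v \<in> V. h v < k) \<and> (\<forall>(u, v) \<in> E. h u \<noteq> h v)"

definition std_path :: "nat \<Rightarrow> nat \<Rightarrow> ('v gvert \<Rightarrow> nat) \<Rightarrow> 'v \<Rightarrow> 'v \<Rightarrow> bool" where
  "std_path p q c a b \<longleftrightarrow>
     (c (Orig a) = 0 \<longrightarrow> (\<forall>i \<le> tpar p q. c (Xv a b i) = ((i + 1) * q) mod p)) \<and>
     (c (Orig b) = 0 \<longrightarrow> (\<forall>i < tpar p q. c (Xv a b i) = (i * q) mod p) \<and> c (Xv a b (tpar p q)) = q) \<and>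
     (c (Orig a) \<noteq> 0 \<and> c (Orig b) \<noteq> 0 \<longrightarrow>
        (\<forall>i < tpar p q. c (Xv a b i) = (i * q) mod p) \<and> c (Xv a b (tpar p q)) = 0)"

definition all_std :: "nat \<Rightarrow> nat \<Rightarrow> ('v \<times> 'v) set \<Rightarrow> ('v gvert \<Rightarrow> nat) \<Rightarrow> bool" where
  "all_std p q E c \<longleftrightarrow> (\<forall>(a, b) \<in> E. std_path p q c a b)"

definition reconf :: "nat \<Rightarrow> nat \<Rightarrow> 'v set \<Rightarrow> ('v \<times> 'v) set \<Rightarrow> ('v gvert \<Rightarrow> nat) \<Rightarrow> ('v gvert \<Rightarrow> nat) \<Rightarrow> bool" where
  "reconf p q V E c c' \<longleftrightarrow>
     (\<exists>cs. cs \<noteq> [] \<and> hd cs = c \<and> last cs = c' \<and> (\<forall>d \<in> set cs. pq_col p q V E d) \<and>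
        (\<forall>i. Suc i < length cs \<longrightarrow>
           card {x \<in> Gvert p q V E. (cs ! i) x \<noteq> (cs ! Suc i) x} \<le> 1))"

end

theory Submission
  imports Defs
begin

locale L =
  fixes p q :: nat and V :: "'v set" and E :: "('v \<times> 'v) set"
  assumes q0: "0 < q" and p4: "4 * q \<le> p" and r1: "1 \<le> rpar p q"
    and finV: "finite V" and EV: "E \<subseteq> V \<times> V" and symE: "sym E" and irrE: "irrefl E"
begin

abbreviation "t \<equiv> tpar p q"
abbreviation "r \<equiv> rpar p q"
abbreviation "k \<equiv> kpar p q"

lemma r_eq: "r = p mod q"
  unfolding rpar_def kpar_def by (metis minus_div_mult_eq_mod)

lemma r_lt: "r < q" using r_eq q0 by simp

lemma p_eq: "p = k * q + r"
  unfolding rpar_def kpar_def using div_times_less_eq_dividend[of p q] by simp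

lemma k4: "4 \<le> k"
proof -
  have "4 * q div q \<le> p div q" using p4 div_le_mono by blast
  thus ?thesis using q0 unfolding kpar_def by simp
qed

lemma p_pos: "0 < p" using p4 q0 by simp

lemma p_big: "4 * q + 1 \<le> p"
proof -
  have "4*q \<le> k*q" using k4 mult_le_mono1 by blast
  thus ?thesis using p_eq r1 by linarith
qed

lemma t_prop: "0 < t \<and> ((t + 1) * q) mod p = r mod p"
proof -
  define w where "w = p - k - 1"
  have kq: "k * q < p" using p_eq r1 by simp
  have "2 \<le> q" using r_lt r1 by linarith
  hence "k * 2 \<le> k * q" by simp
  hence kp: "k + 1 < p" using p_eq k4 q0 r1 p_big by linarith
  have "(w + 1) * q = p * (q - 1) + (p - k * q)"
  proof -
    have "w + 1 = p - k" using kp unfolding w_def by simp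
    hence "(w+1) * q = p * q - k * q" by (simp add: diff_mult_distrib)
    also have "\<dots> = p * (q - 1) + (p - k * q)"
    proof -
      obtain q' where q': "q = Suc q'" using q0 by (cases q) auto
      have "p * q - k * q = (p * q' + p) - k * q" unfolding q' by simp
      also have "\<dots> = p * q' + (p - k * q)" using Nat.add_diff_assoc[OF less_imp_le[OF kq], of "p * q'"] by simp
      finally show ?thesis unfolding q' by simp
    qed
    finally show ?thesis .
  qed
  hence "((w + 1) * q) mod p = r mod p" unfolding rpar_def by simp
  moreover have "0 < w" using kp unfolding w_def by simp
  ultimately have "0 < w \<and> ((w + 1) * q) mod p = r mod p" by simp
  thus ?thesis unfolding tpar_def by (rule LeastI)
qed

lemma t2: "2 \<le> t"
proof (rule ccontr)
  assume "\<not> 2 \<le> t"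
  hence "t = 1" using t_prop by simp
  hence "(2 * q) mod p = r" using t_prop r_lt p_big by simp
  moreover have "(2 * q) mod p = 2 * q" using p_big by simp
  ultimately show False using r_lt by simp
qed

lemma tq: "(int t * int q + int q) mod int p = int r mod int p"
proof -
  have "int (((t + 1) * q) mod p) = int (r mod p)" using t_prop by simp
  thus ?thesis by (simp add: zmod_int algebra_simps)
qed

definition okd :: "nat \<Rightarrow> nat \<Rightarrow> bool" where
  "okd a b \<longleftrightarrow> int q \<le> \<bar>int a - int b\<bar> \<and> \<bar>int a - int b\<bar> \<le> int p - int q"

lemma okd_sym: "okd a b = okd b a" unfolding okd_def by linarith

lemma okd_intro:
  assumes "a < p" "b < p" "(int a - int b) mod int p = z mod int p" "int q \<le> z" "z \<le> int p - int q"
  shows "okd a b"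
proof -
  have zm: "z mod int p = z" using assms(4,5) q0 by simp
  have "(int a - int b) mod int p = z" using assms(3) zm by simp
  then obtain m where m: "int a - int b = z + int p * m"
    by (metis mod_div_mult_eq add.commute mult.commute)
  have "m = 0 \<or> m = -1"
  proof -
    have "int p * m < int p" using m assms by linarith
    hence "m < 1" using p_pos by (metis mult.right_neutral mult_less_cancel_left_pos of_nat_0_less_iff)
    moreover have "int p * m > - 2 * int p" using m assms q0 by linarith
    hence "m > -2" using p_pos by (metis mult.commute mult_less_cancel_left_pos of_nat_0_less_iff)
    ultimately show ?thesis by linarith
  qed
  thus ?thesis using m assms unfolding okd_def by auto
qed

definition M :: "int \<Rightarrow> nat" where "M z = nat (z mod int p)"

lemma int_M[simp]: "int (M z) = z mod int p"
  unfolding M_def using p_pos by simp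

lemma M_lt: "M z < p" unfolding M_def using p_pos
  by (simp add: nat_less_iff)

definition cg :: "int \<Rightarrow> int \<Rightarrow> bool" where "cg x y \<longleftrightarrow> x mod int p = y mod int p"

lemma cg_refl[simp]: "cg x x" unfolding cg_def by simp
lemma cg_sym: "cg x y \<Longrightarrow> cg y x" unfolding cg_def by simp
lemma cg_trans: "cg x y \<Longrightarrow> cg y z \<Longrightarrow> cg x z" unfolding cg_def by simp
lemma cg_add: "cg x y \<Longrightarrow> cg x' y' \<Longrightarrow> cg (x + x') (y + y')" unfolding cg_def by (metis mod_add_cong)
lemma cg_diff: "cg x y \<Longrightarrow> cg x' y' \<Longrightarrow> cg (x - x') (y - y')" unfolding cg_def by (metis mod_diff_cong)
lemma cg_mod[simp]: "cg (x mod int p) x" unfolding cg_def by simp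
lemma cg_nmod[simp]: "cg (int (n mod p)) (int n)" unfolding cg_def by (simp add: zmod_int)
lemma cg_M[simp]: "cg (int (M z)) z" by simp
lemma cg_p[simp]: "cg (x + int p) x" unfolding cg_def by simp
lemma cg_eq: "x = y \<Longrightarrow> cg x y" by simp
lemma cg_plusp: "y = x + int p \<Longrightarrow> cg x y" unfolding cg_def by simp
lemma cg_minusp: "y = x - int p \<Longrightarrow> cg x y" unfolding cg_def by simp
lemma cg_tq: "cg (int t * int q + int q) (int r)" unfolding cg_def using tq by simp

lemma okd_rep:
  assumes "a < p" "b < p" "cg (int a) X" "cg (int b) Y" "cg (X - Y) z" "int q \<le> z" "z \<le> int p - int q"
  shows "okd a b"
proof (rule okd_intro[OF assms(1,2) _ assms(6,7)])
  have "cg (int a - int b) (X - Y)" using assms(3,4) by (rule cg_diff)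
  thus "(int a - int b) mod int p = z mod int p" using assms(5) unfolding cg_def by simp
qed

definition YE :: "nat \<Rightarrow> bool" where
  "YE c \<longleftrightarrow> (\<forall>j\<in>cint p (3 * int q - 1) (int p - int q - 1). okd c j)"
definition YI :: "nat \<Rightarrow> nat \<Rightarrow> bool" where
  "YI i c \<longleftrightarrow> (\<forall>j\<in>cint p ((int i + 3) * int q - 1) ((int i - 1) * int q). okd c j)"

lemma cint_elim:
  assumes "j \<in> cint p a b"
  obtains m where "0 \<le> m" "m \<le> (b - a) mod int p" "int j = (a + m) mod int p" "j < p"
proof -
  from assms obtain m where m: "j = nat ((a + m) mod int p)" "0 \<le> m" "m \<le> (b - a) mod int p"
    unfolding cint_def by blast
  have "int j = (a + m) mod int p" using m(1) p_pos by simp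
  moreover have "j < p" using m(1) p_pos by (simp add: nat_less_iff)
  ultimately show ?thesis using that m by blast
qed

lemma YI_intro:
  assumes "c < p" "cg (int c) (int i * int q + e)" "0 \<le> e" "e \<le> 2 * int q - 1"
  shows "YI i c"
  unfolding YI_def
proof
  fix j assume "j \<in> cint p ((int i + 3) * int q - 1) ((int i - 1) * int q)"
  then obtain m where m: "0 \<le> m" "m \<le> ((int i - 1) * int q - ((int i + 3) * int q - 1)) mod int p"
    "int j = ((int i + 3) * int q - 1 + m) mod int p" "j < p" by (rule cint_elim)
  have "((int i - 1) * int q - ((int i + 3) * int q - 1)) mod int p = 1 - 4 * int q + int p"
  proof -
    have e: "((int i - 1) * int q - ((int i + 3) * int q - 1)) = (1 - 4 * int q + int p) - int p" by (simp add: algebra_simps)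
    have "((int i - 1) * int q - ((int i + 3) * int q - 1)) mod int p = (1 - 4 * int q + int p) mod int p"
      unfolding e by (rule minus_mod_self2)
    also have "\<dots> = 1 - 4 * int q + int p" using p_big q0 by (intro mod_pos_pos_trivial) auto
    finally show ?thesis .
  qed
  hence mb: "m \<le> 1 - 4 * int q + int p" using m(2) by simp
  have cj: "cg (int j) ((int i + 3) * int q - 1 + m)" using m(3) by simp
  show "okd c j"
    apply (rule okd_rep[OF assms(1) m(4) assms(2) cj, where z = "e - 3 * int q + 1 - m + int p"])
    subgoal by (rule cg_plusp) (simp add: algebra_simps)
    using assms mb m(1) by auto
qed

lemma YE_intro:
  assumes "c < p" "cg (int c) d" "-1 \<le> d" "d \<le> 2 * int q - 1"
  shows "YE c"
  unfolding YE_def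
proof
  fix j assume "j \<in> cint p (3 * int q - 1) (int p - int q - 1)"
  then obtain m where m: "0 \<le> m" "m \<le> ((int p - int q - 1) - (3 * int q - 1)) mod int p"
    "int j = (3 * int q - 1 + m) mod int p" "j < p" by (rule cint_elim)
  have "((int p - int q - 1) - (3 * int q - 1)) mod int p = (int p - 4 * int q) mod int p"
    by (simp add: algebra_simps)
  also have "\<dots> = int p - 4 * int q" using p_big q0 by (intro mod_pos_pos_trivial) auto
  finally have "((int p - int q - 1) - (3 * int q - 1)) mod int p = int p - 4 * int q" .
  hence mb: "m \<le> int p - 4 * int q" using m(2) by simp
  have cj: "cg (int j) (3 * int q - 1 + m)" using m(3) by simp
  show "okd c j"
    apply (rule okd_rep[OF assms(1) m(4) assms(2) cj, where z = "d - 3 * int q + 1 - m + int p"])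
    subgoal by (rule cg_plusp) (simp add: algebra_simps)
    using assms mb m(1) by auto
qed

definition pathvalid :: "nat \<Rightarrow> nat \<Rightarrow> (nat \<Rightarrow> nat) \<Rightarrow> bool" where
  "pathvalid A B f \<longleftrightarrow> (\<forall>i\<le>t. f i < p) \<and> okd A (f 0) \<and> okd (f t) B \<and>
     (\<forall>i<t. okd (f i) (f (Suc i))) \<and> YE (f 0) \<and> YE (f t) \<and>
     (\<forall>i. 1 \<le> i \<and> i \<le> t - 1 \<longrightarrow> YI i (f i))"

lemma okd_step:
  assumes "a < p" "b < p" "cg (int a) (int i * int q + e1)" "cg (int b) (int (Suc i) * int q + e2)"
    "0 \<le> e2 - e1" "e2 - e1 \<le> int p - 2 * int q"
  shows "okd a b"
  apply (rule okd_rep[OF assms(1-4), where z = "e1 - e2 - int q + int p"])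
  subgoal by (rule cg_plusp) (simp add: algebra_simps)
  using assms by auto

lemma pv_off:
  assumes bnd: "\<forall>i\<le>t. f i < p"
    and cgf: "\<forall>i\<le>t. cg (int (f i)) (int i * int q + e i)"
    and inc: "\<forall>i<t. 0 \<le> e (Suc i) - e i \<and> e (Suc i) - e i \<le> int p - 2 * int q"
    and intr: "\<forall>i. 1 \<le> i \<and> i \<le> t - 1 \<longrightarrow> 0 \<le> e i \<and> e i \<le> 2 * int q - 1"
    and e0: "-1 \<le> e 0 \<and> e 0 \<le> 2 * int q - 1"
    and et: "cg (int (f t)) d" "-1 \<le> d" "d \<le> 2 * int q - 1"
    and oa: "okd A (f 0)" and ob: "okd (f t) B"
  shows "pathvalid A B f"
  unfolding pathvalid_def
proof (intro conjI allI impI)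
  show "\<And>i. i \<le> t \<Longrightarrow> f i < p" using bnd by auto
  show "okd A (f 0)" "okd (f t) B" by fact+
  show "okd (f i) (f (Suc i))" if "i < t" for i
  proof -
    have a: "cg (int (f i)) (int i * int q + e i)" "cg (int (f (Suc i))) (int (Suc i) * int q + e (Suc i))"
      using cgf that by (auto simp del: of_nat_Suc)
    show ?thesis using okd_step[OF _ _ a] bnd inc that by auto
  qed
  show "YE (f 0)" using YE_intro[of "f 0" "e 0"] bnd cgf e0 by auto
  show "YE (f t)" using YE_intro[of "f t" d] bnd et by auto
  show "YI i (f i)" if "1 \<le> i \<and> i \<le> t - 1" for i
    using YI_intro[of "f i" i "e i"] bnd cgf intr that by auto
qed

definition col :: "('v \<Rightarrow> nat) \<Rightarrow> ('v \<Rightarrow> 'v \<Rightarrow> nat \<Rightarrow> nat) \<Rightarrow> 'v gvert \<Rightarrow> nat" where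
  "col oc P x = (case x of Orig v \<Rightarrow> oc v | Yv j \<Rightarrow> j | Xv a b i \<Rightarrow> P a b i)"

lemma col_simps[simp]: "col oc P (Orig v) = oc v" "col oc P (Yv j) = j" "col oc P (Xv a b i) = P a b i"
  unfolding col_def by auto

definition valid :: "('v \<Rightarrow> nat) \<Rightarrow> ('v \<Rightarrow> 'v \<Rightarrow> nat \<Rightarrow> nat) \<Rightarrow> bool" where
  "valid oc P \<longleftrightarrow> (\<forall>v\<in>V. oc v < p) \<and> (\<forall>(a,b)\<in>E. okd (oc a) (oc b) \<and> pathvalid (oc a) (oc b) (P a b))"

lemma arc_ok:
  assumes "valid oc P" "Garc p q V E x y"
  shows "okd (col oc P x) (col oc P y)"
  using assms(2) unfolding Garc_def
proof (elim disjE exE conjE)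
  show ?thesis if "x = Yv i" "y = Yv j" "i < p" "j < p" "int q \<le> \<bar>int i - int j\<bar>" "\<bar>int i - int j\<bar> \<le> int p - int q" for i j
    using that unfolding okd_def by simp
qed (use assms(1) in \<open>auto simp: valid_def pathvalid_def YE_def YI_def okd_sym\<close>)

lemma valid_pq: "valid oc P \<Longrightarrow> pq_col p q V E (col oc P)"
  unfolding pq_col_def
proof (intro conjI ballI impI)
  fix x assume v: "valid oc P" and x: "x \<in> Gvert p q V E"
  show "col oc P x < p" using x v unfolding Gvert_def valid_def pathvalid_def by auto
next
  fix x y assume v: "valid oc P" and "Gadj p q V E x y"
  hence "okd (col oc P x) (col oc P y)" unfolding Gadj_def using arc_ok okd_sym by blast
  thus "int q \<le> \<bar>int (col oc P x) - int (col oc P y)\<bar>"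
    "\<bar>int (col oc P x) - int (col oc P y)\<bar> \<le> int p - int q" unfolding okd_def by auto
qed

lemma rtranclp_sym:
  assumes "\<And>x y. R x y \<Longrightarrow> R y x" "R\<^sup>*\<^sup>* x y" shows "R\<^sup>*\<^sup>* y x"
  using assms(2)
proof (induction rule: rtranclp_induct)
  case base then show ?case by simp
next
  case (step y z) then show ?case using assms(1) by (meson converse_rtranclp_into_rtranclp)
qed

definition step :: "('v gvert \<Rightarrow> nat) \<Rightarrow> ('v gvert \<Rightarrow> nat) \<Rightarrow> bool" where
  "step c c' \<longleftrightarrow> pq_col p q V E c \<and> pq_col p q V E c' \<and> card {x \<in> Gvert p q V E. c x \<noteq> c' x} \<le> 1"

lemma step_sym: "step c c' \<Longrightarrow> step c' c"
proof -
  assume a: "step c c'"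
  have "{x \<in> Gvert p q V E. c' x \<noteq> c x} = {x \<in> Gvert p q V E. c x \<noteq> c' x}" by auto
  thus ?thesis using a unfolding step_def by simp
qed

lemma step_intro:
  assumes "pq_col p q V E c" "pq_col p q V E c'" "\<forall>x\<in>Gvert p q V E. x \<noteq> z \<longrightarrow> c x = c' x"
  shows "step c c'"
proof -
  have "{x \<in> Gvert p q V E. c x \<noteq> c' x} \<subseteq> {z}" using assms(3) by auto
  hence "card {x \<in> Gvert p q V E. c x \<noteq> c' x} \<le> card {z}" by (intro card_mono) auto
  thus ?thesis using assms unfolding step_def by simp
qed

lemma steps_pq: "step\<^sup>*\<^sup>* c c' \<Longrightarrow> pq_col p q V E c \<Longrightarrow> pq_col p q V E c'"
  by (induction rule: rtranclp_induct) (auto simp: step_def)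

lemma steps_reconf:
  assumes "step\<^sup>*\<^sup>* c c'" "pq_col p q V E c"
  shows "reconf p q V E c c'"
  using assms
proof (induction rule: rtranclp_induct)
  case base
  show ?case unfolding reconf_def by (intro exI[of _ "[c]"]) (use base in auto)
next
  case (step c1 c2)
  then obtain cs where cs: "cs \<noteq> []" "hd cs = c" "last cs = c1" "\<forall>d\<in>set cs. pq_col p q V E d"
    "\<forall>i. Suc i < length cs \<longrightarrow> card {x \<in> Gvert p q V E. (cs ! i) x \<noteq> (cs ! Suc i) x} \<le> 1"
    unfolding reconf_def by blast
  show ?case unfolding reconf_def
  proof (intro exI[of _ "cs @ [c2]"] conjI allI impI)
    show "cs @ [c2] \<noteq> []" "last (cs @ [c2]) = c2" by auto
    show "hd (cs @ [c2]) = c" using cs by simp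
    show "\<forall>d\<in>set (cs @ [c2]). pq_col p q V E d" using cs step.hyps(2) unfolding step_def by auto
    fix i assume i: "Suc i < length (cs @ [c2])"
    show "card {x \<in> Gvert p q V E. ((cs @ [c2]) ! i) x \<noteq> ((cs @ [c2]) ! Suc i) x} \<le> 1"
    proof (cases "Suc i < length cs")
      case True thus ?thesis using cs(5) by (simp add: nth_append)
    next
      case False
      hence "i = length cs - 1" using i by simp
      moreover have "cs ! (length cs - 1) = c1" using cs(1,3) by (simp add: last_conv_nth)
      ultimately show ?thesis using step.hyps(2) cs(1) unfolding step_def by (simp add: nth_append)
    qed
  qed
qed

definition pstep :: "nat \<Rightarrow> nat \<Rightarrow> (nat \<Rightarrow> nat) \<Rightarrow> (nat \<Rightarrow> nat) \<Rightarrow> bool" where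
  "pstep A B f g \<longleftrightarrow> pathvalid A B f \<and> pathvalid A B g \<and> (\<exists>i\<le>t. \<forall>j\<le>t. j \<noteq> i \<longrightarrow> f j = g j)"

lemma pstep_sym: "pstep A B f g \<Longrightarrow> pstep A B g f" unfolding pstep_def by metis

lemma psteps_sym: "(pstep A B)\<^sup>*\<^sup>* f g \<Longrightarrow> (pstep A B)\<^sup>*\<^sup>* g f"
  by (rule rtranclp_sym[OF pstep_sym])

definition upd :: "('v \<Rightarrow> 'v \<Rightarrow> nat \<Rightarrow> nat) \<Rightarrow> 'v \<Rightarrow> 'v \<Rightarrow> (nat \<Rightarrow> nat) \<Rightarrow> 'v \<Rightarrow> 'v \<Rightarrow> nat \<Rightarrow> nat" where
  "upd P a b f = (\<lambda>x y. if x = a \<and> y = b then f else P x y)"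

lemma valid_upd:
  assumes "valid oc (upd P a b f)" "pathvalid (oc a) (oc b) g"
  shows "valid oc (upd P a b g)"
  using assms unfolding valid_def upd_def by auto

lemma Xv_Gvert: "Xv a b i \<in> Gvert p q V E \<Longrightarrow> i \<le> t"
  unfolding Gvert_def by auto

lemma lift:
  assumes "(pstep (oc a) (oc b))\<^sup>*\<^sup>* f g" "valid oc (upd P a b f)"
  shows "step\<^sup>*\<^sup>* (col oc (upd P a b f)) (col oc (upd P a b g))"
  using assms
proof (induction rule: rtranclp_induct)
  case base then show ?case by simp
next
  case (step g1 g2)
  have v1: "valid oc (upd P a b g1)" using step valid_upd unfolding pstep_def by blast
  have v2: "valid oc (upd P a b g2)" using v1 step(2) valid_upd unfolding pstep_def by blast
  from step(2) obtain i where i: "i \<le> t" "\<forall>j\<le>t. j \<noteq> i \<longrightarrow> g1 j = g2 j" unfolding pstep_def by blast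
  have "step (col oc (upd P a b g1)) (col oc (upd P a b g2))"
  proof (rule step_intro[OF valid_pq[OF v1] valid_pq[OF v2], where z = "Xv a b i"], intro ballI impI)
    fix x assume "x \<in> Gvert p q V E" "x \<noteq> Xv a b i"
    thus "col oc (upd P a b g1) x = col oc (upd P a b g2) x"
      using i Xv_Gvert by (cases x) (auto simp: upd_def)
  qed
  thus ?case using step by simp
qed

lemma phase:
  assumes "finite F" "F \<subseteq> E" "valid oc OLD"
    "\<forall>(a,b)\<in>F. pathvalid (oc a) (oc b) (NEW a b)"
    "\<forall>(a,b)\<in>F. (pstep (oc a) (oc b))\<^sup>*\<^sup>* (OLD a b) (NEW a b)"
  shows "step\<^sup>*\<^sup>* (col oc OLD) (col oc (\<lambda>a b. if (a,b)\<in>F then NEW a b else OLD a b))"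
proof -
  have "finite D \<Longrightarrow> D \<subseteq> F \<Longrightarrow> step\<^sup>*\<^sup>* (col oc OLD) (col oc (\<lambda>a b. if (a,b)\<in>D then NEW a b else OLD a b)) \<and>
     valid oc (\<lambda>a b. if (a,b)\<in>D then NEW a b else OLD a b)" for D
  proof (induction D rule: finite_induct)
    case empty show ?case using assms(3) by simp
  next
    case (insert e D)
    obtain a b where e: "e = (a,b)" by (cases e)
    let ?PD = "\<lambda>a b. if (a,b)\<in>D then NEW a b else OLD a b"
    have IH: "step\<^sup>*\<^sup>* (col oc OLD) (col oc ?PD)" "valid oc ?PD" using insert by auto
    have eq1: "?PD = upd ?PD a b (OLD a b)" using insert(2) e unfolding upd_def by (auto intro!: ext)
    have eq2: "(\<lambda>x y. if (x,y)\<in>insert e D then NEW x y else OLD x y) = upd ?PD a b (NEW a b)"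
      using e unfolding upd_def by (auto intro!: ext)
    have ab: "(a,b) \<in> F" using insert e by auto
    have "step\<^sup>*\<^sup>* (col oc (upd ?PD a b (OLD a b))) (col oc (upd ?PD a b (NEW a b)))"
      by (rule lift) (use assms(5) ab IH(2) eq1 in auto)
    moreover have "valid oc (upd ?PD a b (NEW a b))"
      by (rule valid_upd[where f = "OLD a b"]) (use assms(4) ab IH(2) eq1 in auto)
    ultimately show ?case using IH(1) eq1 eq2 by (metis (no_types, lifting) rtranclp_trans)
  qed
  thus ?thesis using assms(1) by blast
qed

definition mix :: "(nat \<Rightarrow> nat) \<Rightarrow> (nat \<Rightarrow> nat) \<Rightarrow> nat \<Rightarrow> nat \<Rightarrow> nat" where
  "mix A B m = (\<lambda>i. if i < m then A i else B i)"

lemma mix_chain: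
  assumes "\<forall>m\<le>Suc t. pathvalid EA EB (mix A B m)" "pathvalid EA EB A"
  shows "(pstep EA EB)\<^sup>*\<^sup>* B A"
proof -
  have "m \<le> Suc t \<Longrightarrow> (pstep EA EB)\<^sup>*\<^sup>* B (mix A B m)" for m
  proof (induction m)
    case 0 have "mix A B 0 = B" unfolding mix_def by auto
    thus ?case by simp
  next
    case (Suc m)
    have "pstep EA EB (mix A B m) (mix A B (Suc m))" unfolding pstep_def
      using assms(1) Suc(2) by (intro conjI exI[of _ m]) (auto simp: mix_def)
    thus ?case using Suc by auto
  qed
  hence "(pstep EA EB)\<^sup>*\<^sup>* B (mix A B (Suc t))" by simp
  moreover have "pstep EA EB (mix A B (Suc t)) A" unfolding pstep_def
    using assms by (intro conjI exI[of _ 0]) (auto simp: mix_def)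
  ultimately show ?thesis by simp
qed

lemma pv_mix:
  assumes "\<forall>i\<le>t. A i < p" "\<forall>i\<le>t. B i < p"
    and "\<forall>i\<le>t. cg (int (A i)) (int i * int q + eA i)"
    and "\<forall>i\<le>t. cg (int (B i)) (int i * int q + eB i)"
    and "\<forall>i<t. 0 \<le> eA (Suc i) - eA i \<and> eA (Suc i) - eA i \<le> int p - 2 * int q"
    and "\<forall>i<t. 0 \<le> eB (Suc i) - eB i \<and> eB (Suc i) - eB i \<le> int p - 2 * int q"
    and "\<forall>i<t. 0 \<le> eB (Suc i) - eA i \<and> eB (Suc i) - eA i \<le> int p - 2 * int q"
    and "\<forall>i. 1 \<le> i \<and> i \<le> t - 1 \<longrightarrow> 0 \<le> eA i \<and> eA i \<le> 2 * int q - 1"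
    and "\<forall>i. 1 \<le> i \<and> i \<le> t - 1 \<longrightarrow> 0 \<le> eB i \<and> eB i \<le> 2 * int q - 1"
    and "-1 \<le> eA 0 \<and> eA 0 \<le> 2 * int q - 1" "-1 \<le> eB 0 \<and> eB 0 \<le> 2 * int q - 1"
    and "cg (int (A t)) dA" "-1 \<le> dA" "dA \<le> 2 * int q - 1"
    and "cg (int (B t)) dB" "-1 \<le> dB" "dB \<le> 2 * int q - 1"
    and "okd EA (A 0)" "okd EA (B 0)" "okd (A t) EB" "okd (B t) EB"
  shows "\<forall>m\<le>Suc t. pathvalid EA EB (mix A B m)"
proof (intro allI impI)
  fix m assume m: "m \<le> Suc t"
  let ?e = "\<lambda>i. if i < m then eA i else eB i"
  show "pathvalid EA EB (mix A B m)"
  proof (rule pv_off[where e = ?e and d = "if t < m then dA else dB"])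
    show "\<forall>i<t. 0 \<le> ?e (Suc i) - ?e i \<and> ?e (Suc i) - ?e i \<le> int p - 2 * int q"
    proof (intro allI impI)
      fix i assume i: "i < t"
      consider "Suc i < m" | "i < m" "\<not> Suc i < m" | "\<not> i < m" by linarith
      thus "0 \<le> ?e (Suc i) - ?e i \<and> ?e (Suc i) - ?e i \<le> int p - 2 * int q"
        by cases (use assms(5-7) i in auto)
    qed
  qed (use assms in \<open>auto simp: mix_def\<close>)
qed

lemma ustep:
  assumes "valid oc P" "valid (oc(u := w)) P"
  shows "step (col oc P) (col (oc(u := w)) P)"
proof -
  have "\<forall>x\<in>Gvert p q V E. x \<noteq> Orig u \<longrightarrow> col oc P x = col (oc(u := w)) P x"
  proof (intro ballI impI)
    fix x :: "'v gvert" assume "x \<noteq> Orig u"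
    thus "col oc P x = col (oc(u := w)) P x" by (cases x) simp_all
  qed
  thus ?thesis by (rule step_intro[OF valid_pq[OF assms(1)] valid_pq[OF assms(2)]])
qed

lemma cg_lin: "x - y = (int t * int q + int q - int r) * c + int p * d \<Longrightarrow> cg x y"
proof -
  assume a: "x - y = (int t * int q + int q - int r) * c + int p * d"
  have "(int t * int q + int q - int r) mod int p = (int r - int r) mod int p" by (rule mod_diff_cong[OF tq refl])
  hence "(int t * int q + int q - int r) mod int p = 0" by simp
  hence "int p dvd (int t * int q + int q - int r)" by auto
  hence "int p dvd (x - y)" unfolding a by simp
  thus "cg x y" unfolding cg_def by (simp add: mod_eq_dvd_iff)
qed

abbreviation "gm \<equiv> gam p q"

lemma gam0[simp]: "gm 0 = 0" unfolding gam_def by simp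
lemma gamS: "1 \<le> j \<Longrightarrow> gm j = j * q + r" unfolding gam_def by simp

lemma kq_le: "j < k \<Longrightarrow> j * q + r \<le> p - q"
proof -
  assume "j < k"
  hence "j * q \<le> (k - 1) * q" by (intro mult_le_mono1) simp
  moreover have "(k - 1) * q + q = k * q" using k4 by (metis Suc_diff_1 add.commute less_le_trans mult_Suc zero_less_numeral)
  ultimately show ?thesis using p_eq by linarith
qed

lemma gam_lt: "j < k \<Longrightarrow> gm j < p"
  using kq_le[of j] q0 p_big unfolding gam_def by auto

lemma okd_nat: "a < p \<Longrightarrow> b < p \<Longrightarrow> b + q \<le> a \<Longrightarrow> a \<le> b + (p - q) \<Longrightarrow> okd a b"
  unfolding okd_def by auto

lemma okd_gam: "i < k \<Longrightarrow> j < k \<Longrightarrow> i \<noteq> j \<Longrightarrow> okd (gm i) (gm j)"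
proof -
  have main: "i < k \<Longrightarrow> j < k \<Longrightarrow> i < j \<Longrightarrow> okd (gm j) (gm i)" for i j
  proof -
    assume a: "i < k" "j < k" "i < j"
    have "i * q + q \<le> j * q" using a(3) by (metis add.commute mult_Suc less_eq_Suc_le mult_le_mono1)
    show "okd (gm j) (gm i)"
    proof (cases "i = 0")
      case True
      have "q \<le> j * q" using a(3) by (cases j) auto
      hence qq: "q \<le> j * q + r" by linarith
      show ?thesis using True kq_le[OF a(2)] a gam_lt[OF a(2)] q0 qq by (intro okd_nat) (auto simp: gamS)
    next
      case False
      have "j * q \<le> i * q + (p - q)" using kq_le[OF a(2)] by linarith
      then show ?thesis using False a gam_lt[OF a(1)] gam_lt[OF a(2)] `i * q + q \<le> j * q` by (intro okd_nat) (auto simp: gamS)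
    qed
  qed
  assume "i < k" "j < k" "i \<noteq> j"
  thus ?thesis using main[of i j] main[of j i] okd_sym by (cases "i < j") auto
qed


lemma t_ne[simp]: "t - Suc 0 \<noteq> t" "t \<noteq> t - Suc 0" "\<not> t < t - Suc 0" "0 < t - Suc 0" "0 \<noteq> t - Suc 0" "t - Suc 0 \<noteq> 0"
  using t2 by auto

lemma cg_nmod_iff[simp]: "cg (int (n mod p)) y = cg (int n) y"
  unfolding cg_def by (simp add: zmod_int)
definition cfg :: "(nat \<Rightarrow> nat) \<Rightarrow> (nat \<Rightarrow> int) \<Rightarrow> int \<Rightarrow> bool" where
  "cfg f e d \<longleftrightarrow> (\<forall>i\<le>t. f i < p) \<and> (\<forall>i\<le>t. cg (int (f i)) (int i * int q + e i)) \<and>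
     (\<forall>i<t. 0 \<le> e (Suc i) - e i \<and> e (Suc i) - e i \<le> int p - 2 * int q) \<and>
     (\<forall>i. 1 \<le> i \<and> i \<le> t - 1 \<longrightarrow> 0 \<le> e i \<and> e i \<le> 2 * int q - 1) \<and>
     -1 \<le> e 0 \<and> e 0 \<le> 2 * int q - 1 \<and> cg (int (f t)) d \<and> -1 \<le> d \<and> d \<le> 2 * int q - 1"

lemma pv_cfg: "cfg f e d \<Longrightarrow> okd A (f 0) \<Longrightarrow> okd (f t) B \<Longrightarrow> pathvalid A B f"
  unfolding cfg_def by (elim conjE, rule pv_off[where e = e and d = d]) blast+

lemma mix_cfg:
  assumes "cfg A eA dA" "cfg B eB dB"
    "\<forall>i<t. 0 \<le> eB (Suc i) - eA i \<and> eB (Suc i) - eA i \<le> int p - 2 * int q"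
    "okd EA (A 0)" "okd EA (B 0)" "okd (A t) EB" "okd (B t) EB"
  shows "(pstep EA EB)\<^sup>*\<^sup>* B A"
proof (rule mix_chain)
  show "pathvalid EA EB A" using pv_cfg assms by blast
  show "\<forall>m\<le>Suc t. pathvalid EA EB (mix A B m)"
    using assms[unfolded cfg_def]
    apply -
    apply (elim conjE)
    apply (rule pv_mix[where eA = eA and eB = eB and dA = dA and dB = dB])
    apply blast+
    done
qed

definition O0 :: "nat \<Rightarrow> nat" where "O0 i = ((i + 1) * q) mod p"
definition Ib :: "nat \<Rightarrow> nat" where "Ib i = (if i < t then (i * q) mod p else q)"
definition Ost :: "nat \<Rightarrow> nat" where "Ost i = (if i < t then (i * q) mod p else 0)"
definition O1 :: "nat \<Rightarrow> nat" where "O1 i = M ((int i + 2) * int q - 1)"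
definition O2 :: "nat \<Rightarrow> nat" where "O2 i = (if i = 0 then p - 1 else Ost i)"
definition Ic :: "nat \<Rightarrow> nat \<Rightarrow> nat" where
  "Ic X i = (if i < t - 1 then (i * q) mod p else if i = t - 1 then p - q - 1 else X)"

lemma t_ge1: "1 \<le> t" using t2 by simp

lemma O0_t: "O0 t = r" unfolding O0_def using t_prop r_lt p_big by simp

lemma cfg_O0: "cfg O0 (\<lambda>i. int q) (int r)"
  unfolding cfg_def
proof (intro conjI allI impI)
  show "O0 i < p" for i unfolding O0_def using p_pos by simp
  show "cg (int (O0 i)) (int i * int q + int q)" for i
    unfolding O0_def by (rule cg_trans[OF cg_nmod]) (simp add: algebra_simps)
  show "cg (int (O0 t)) (int r)" using O0_t by simp
qed (use q0 p_big r_lt r1 t2 in auto)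

lemma cfg_Ib: "cfg Ib (\<lambda>i. if i < t then 0 else 2 * int q - int r) (int q)"
  unfolding cfg_def
proof (intro conjI allI impI)
  show "Ib i < p" for i unfolding Ib_def using p_pos p_big by simp
  show "cg (int (Ib i)) (int i * int q + (if i < t then 0 else 2 * int q - int r))" if "i \<le> t" for i
  proof (cases "i < t")
    case True thus ?thesis unfolding Ib_def by simp
  next
    case False hence "i = t" using that by simp
    thus ?thesis unfolding Ib_def by (intro cg_lin[where c = "-1" and d = 0]) (simp add: algebra_simps)
  qed
  show "cg (int (Ib t)) (int q)" unfolding Ib_def by simp
qed (use q0 p_big r_lt r1 t2 in auto)

lemma cfg_Ost: "cfg Ost (\<lambda>i. if i < t then 0 else int q - int r) 0"
  unfolding cfg_def
proof (intro conjI allI impI)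
  show "Ost i < p" for i unfolding Ost_def using p_pos p_big by simp
  show "cg (int (Ost i)) (int i * int q + (if i < t then 0 else int q - int r))" if "i \<le> t" for i
  proof (cases "i < t")
    case True thus ?thesis unfolding Ost_def by simp
  next
    case False hence "i = t" using that by simp
    thus ?thesis unfolding Ost_def by (intro cg_lin[where c = "-1" and d = 0]) (simp add: algebra_simps)
  qed
  show "cg (int (Ost t)) 0" unfolding Ost_def by simp
qed (use q0 p_big r_lt r1 t2 in auto)

lemma cfg_O1: "cfg O1 (\<lambda>i. 2 * int q - 1) (int r + int q - 1)"
  unfolding cfg_def
proof (intro conjI allI impI)
  show "O1 i < p" for i unfolding O1_def by (rule M_lt)
  show "cg (int (O1 i)) (int i * int q + (2 * int q - 1))" for i
    unfolding O1_def by (rule cg_trans[OF cg_M]) (simp add: algebra_simps)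
  show "cg (int (O1 t)) (int r + int q - 1)"
    unfolding O1_def by (rule cg_trans[OF cg_M]) (rule cg_lin[where c = 1 and d = 0], simp add: algebra_simps)
qed (use q0 p_big r_lt r1 t2 in auto)

lemma cfg_O2: "cfg O2 (\<lambda>i. if i = 0 then -1 else if i < t then 0 else int q - int r) 0"
  unfolding cfg_def
proof (intro conjI allI impI)
  show "O2 i < p" for i unfolding O2_def Ost_def using p_pos p_big by simp
  show "cg (int (O2 i)) (int i * int q + (if i = 0 then -1 else if i < t then 0 else int q - int r))" if "i \<le> t" for i
  proof (cases "i = 0")
    case True thus ?thesis unfolding O2_def using p_pos by (intro cg_lin[where c = 0 and d = 1]) (simp add: of_nat_diff)
  next
    case False thus ?thesis using cfg_Ost that unfolding cfg_def O2_def by auto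
  qed
  show "cg (int (O2 t)) 0" using t_ge1 unfolding O2_def Ost_def by simp
qed (use q0 p_big r_lt r1 t2 in auto)

definition eIc :: "int \<Rightarrow> nat \<Rightarrow> int" where
  "eIc eX i = (if i < t - 1 then 0 else if i = t - 1 then int q - int r - 1 else eX)"

lemma cfg_Ic:
  assumes "X < p" "cg (int X) (int t * int q + eX)" "int q - int r - 1 \<le> eX" "eX \<le> int p - int q - int r - 1"
    "cg (int X) d" "-1 \<le> d" "d \<le> 2 * int q - 1"
  shows "cfg (Ic X) (eIc eX) d"
  unfolding cfg_def
proof (intro conjI allI impI)
  show "Ic X i < p" for i unfolding Ic_def using p_pos p_big assms(1) by simp
  show "cg (int (Ic X i)) (int i * int q + eIc eX i)" if "i \<le> t" for i
  proof -
    have "i < t - 1 \<or> i = t - 1 \<or> i = t" using that by linarith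
    then consider "i < t - 1" | "i = t - 1" | "i = t" by blast
    thus ?thesis
    proof cases
      case 1 thus ?thesis unfolding Ic_def eIc_def by simp
    next
      case 2
      have it: "int i = int t - 1" using 2 t_ge1 by simp
      show ?thesis unfolding Ic_def eIc_def using 2 p_big it
        by (simp, intro cg_lin[where c = "-1" and d = 1]) (simp add: of_nat_diff algebra_simps)
    next
      case 3
      have ne: "\<not> t < t - 1" "t \<noteq> t - 1" using t2 by auto
      thus ?thesis unfolding Ic_def eIc_def using 3 assms(2) by simp
    qed
  qed
  show "cg (int (Ic X t)) d" unfolding Ic_def using t_ge1 assms(5) by simp
  show "0 \<le> eIc eX (Suc i) - eIc eX i" "eIc eX (Suc i) - eIc eX i \<le> int p - 2 * int q" if "i < t" for i
    using that assms(3,4) r_lt t2 p_big unfolding eIc_def by auto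
  show "0 \<le> eIc eX i" "eIc eX i \<le> 2 * int q - 1" if "1 \<le> i \<and> i \<le> t - 1" for i
    using that r_lt unfolding eIc_def by auto
  show "-1 \<le> eIc eX 0" "eIc eX 0 \<le> 2 * int q - 1" using t2 q0 unfolding eIc_def by auto
qed (use assms in auto)

lemma finE: "finite E" using finV EV by (meson finite_SigmaI finite_subset)

lemma agree_steps:
  assumes "valid oc P" "valid oc' P'" "\<forall>v\<in>V. oc v = oc' v" "\<forall>(a,b)\<in>E. \<forall>i\<le>t. P a b i = P' a b i"
  shows "step (col oc P) (col oc' P')"
  by (rule step_intro[OF valid_pq[OF assms(1)] valid_pq[OF assms(2)], where z = "Yv 0"])
     (use assms(3,4) in \<open>auto simp: Gvert_def\<close>)

lemma valid_change_u:
  assumes "valid oc P" "w < p"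
    "\<forall>b. (u,b) \<in> E \<longrightarrow> okd w (oc b) \<and> pathvalid w (oc b) (P u b)"
    "\<forall>a. (a,u) \<in> E \<longrightarrow> okd (oc a) w \<and> pathvalid (oc a) w (P a u)"
  shows "valid (oc(u := w)) P"
proof -
  have nl: "(a,b) \<in> E \<Longrightarrow> a \<noteq> b" for a b using irrE unfolding irrefl_def by auto
  show ?thesis using assms nl unfolding valid_def by fastforce
qed

lemma phaseU:
  assumes "valid oc P" "\<forall>(a,b)\<in>E. a \<noteq> u \<and> b \<noteq> u \<longrightarrow> P' a b = P a b"
    "\<forall>b. (u,b) \<in> E \<longrightarrow> pathvalid (oc u) (oc b) (P' u b) \<and> (pstep (oc u) (oc b))\<^sup>*\<^sup>* (P u b) (P' u b)"
    "\<forall>a. (a,u) \<in> E \<longrightarrow> pathvalid (oc a) (oc u) (P' a u) \<and> (pstep (oc a) (oc u))\<^sup>*\<^sup>* (P a u) (P' a u)"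
  shows "step\<^sup>*\<^sup>* (col oc P) (col oc P') \<and> valid oc P'"
proof -
  have pv: "\<forall>(a,b)\<in>E. pathvalid (oc a) (oc b) (P' a b)"
    using assms(1-4) unfolding valid_def by fastforce
  have ps: "\<forall>(a,b)\<in>E. (pstep (oc a) (oc b))\<^sup>*\<^sup>* (P a b) (P' a b)"
    using assms(2-4) by fastforce
  let ?Q = "\<lambda>a b. if (a,b) \<in> E then P' a b else P a b"
  have s1: "step\<^sup>*\<^sup>* (col oc P) (col oc ?Q)"
    by (rule phase[OF finE subset_refl assms(1)]) (use pv ps in auto)
  have vQ: "valid oc ?Q" using pv assms(1) unfolding valid_def by auto
  have vP': "valid oc P'" using pv assms(1) unfolding valid_def by auto
  have "step (col oc ?Q) (col oc P')" by (rule agree_steps[OF vQ vP']) auto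
  thus ?thesis using s1 vP' by simp
qed

definition stdP :: "('v \<Rightarrow> nat) \<Rightarrow> 'v \<Rightarrow> 'v \<Rightarrow> nat \<Rightarrow> nat" where
  "stdP oc a b = (if oc a = 0 then O0 else if oc b = 0 then Ib else Ost)"

lemma gam_eq0: "gm j = 0 \<longleftrightarrow> j = 0" unfolding gam_def using r1 by auto

lemma O0_0: "O0 0 = q" unfolding O0_def using p_big by simp
lemma Ib_0: "Ib 0 = 0" unfolding Ib_def using t_ge1 by simp
lemma Ib_t: "Ib t = q" unfolding Ib_def by simp
lemma Ost_0: "Ost 0 = 0" unfolding Ost_def using t_ge1 by simp
lemma Ost_t: "Ost t = 0" unfolding Ost_def by simp
lemma O2_0: "O2 0 = p - 1" unfolding O2_def by simp
lemma O2_t: "O2 t = 0" unfolding O2_def Ost_def using t_ge1 by simp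
lemma Ic_0: "Ic X 0 = 0" unfolding Ic_def using t2 by simp
lemma Ic_t: "Ic X t = X" unfolding Ic_def using t2 by simp

lemma cg_nat_eq: "a < p \<Longrightarrow> 0 \<le> y \<Longrightarrow> y < int p \<Longrightarrow> cg (int a) y \<Longrightarrow> int a = y"
  unfolding cg_def by simp

lemma O1_0: "O1 0 = 2 * q - 1" unfolding O1_def M_def using p_big q0 by (simp add: nat_diff_distrib)
lemma O1_t: "O1 t = r + q - 1"
proof -
  have "int (O1 t) = int r + int q - 1"
    by (rule cg_nat_eq) (use cfg_O1 r_lt p_big q0 in \<open>auto simp: cfg_def\<close>)
  thus ?thesis using q0 by linarith
qed

lemma okL1: "1 \<le> j \<Longrightarrow> j < k \<Longrightarrow> s \<le> r \<Longrightarrow> okd (gm j) s"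
proof -
  assume a: "1 \<le> j" "j < k" "s \<le> r"
  have "q \<le> j * q" using a(1) by (cases j) auto
  hence "s + q \<le> j * q + r" using a(3) by linarith
  thus "okd (gm j) s" using a kq_le[OF a(2)] gam_lt[OF a(2)] r_lt p_big by (intro okd_nat) (auto simp: gamS)
qed

lemma okL2: "2 \<le> j \<Longrightarrow> j < k \<Longrightarrow> s \<le> q + r \<Longrightarrow> okd (gm j) s"
proof -
  assume a: "2 \<le> j" "j < k" "s \<le> q + r"
  have "2 * q \<le> j * q" using a(1) by (intro mult_le_mono1)
  hence "s + q \<le> j * q + r" using a(3) by linarith
  thus "okd (gm j) s" using a kq_le[OF a(2)] gam_lt[OF a(2)] r_lt p_big by (intro okd_nat) (auto simp: gamS)
qed

lemma okL1s: "1 \<le> j \<Longrightarrow> j < k \<Longrightarrow> s \<le> r \<Longrightarrow> okd s (gm j)"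
  using okL1 okd_sym by blast
lemma okL2s: "2 \<le> j \<Longrightarrow> j < k \<Longrightarrow> s \<le> q + r \<Longrightarrow> okd s (gm j)"
  using okL2 okd_sym by blast

lemma oks_aux:
  "okd q 0" "okd (2 * q - 1) 0" "okd (2 * q - 1) (q - 1)" "okd (p - 1) (q - 1)" "okd (p - 1) (q + r)"
  using p_big q0 r_lt by (auto intro!: okd_nat)

lemma oks: "okd q 0" "okd 0 q" "okd (2 * q - 1) 0" "okd 0 (2 * q - 1)" "okd (2 * q - 1) (q - 1)"
  "okd (q - 1) (2 * q - 1)" "okd (p - 1) (q - 1)" "okd (q - 1) (p - 1)" "okd (p - 1) (q + r)" "okd (q + r) (p - 1)"
  using oks_aux okd_sym by auto

lemma k_col_lt: "k_col k V E g \<Longrightarrow> (a,b) \<in> E \<Longrightarrow> g a < k \<and> g b < k \<and> g a \<noteq> g b"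
  unfolding k_col_def using EV by auto

lemma std_valid:
  assumes "k_col k V E g"
  shows "valid (gm \<circ> g) (stdP (gm \<circ> g))"
  unfolding valid_def
proof (intro conjI ballI)
  show "(gm \<circ> g) v < p" if "v \<in> V" for v using assms that gam_lt unfolding k_col_def by auto
  fix e assume e: "e \<in> E"
  obtain a b where ab: "e = (a,b)" by (cases e)
  have g: "g a < k" "g b < k" "g a \<noteq> g b" using k_col_lt[OF assms] e ab by auto
  have "okd (gm (g a)) (gm (g b))" using okd_gam g by blast
  moreover have "pathvalid (gm (g a)) (gm (g b)) (stdP (gm \<circ> g) a b)"
  proof (cases "g a = 0")
    case True
    hence "1 \<le> g b" using g by simp
    then show ?thesis using True unfolding stdP_def
      by (simp, intro pv_cfg[OF cfg_O0]) (use g okL1 okL1s oks O0_t O0_0 in auto)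
  next
    case F: False
    show ?thesis
    proof (cases "g b = 0")
      case True
      then show ?thesis using F g unfolding stdP_def
        by (simp add: gam_eq0, intro pv_cfg[OF cfg_Ib]) (use g okL1 okL1s oks Ib_0 Ib_t in auto)
    next
      case False
      then show ?thesis using F g unfolding stdP_def
        by (simp add: gam_eq0, intro pv_cfg[OF cfg_Ost]) (use g okL1 okL1s Ost_0 Ost_t in auto)
    qed
  qed
  ultimately show "case e of (a, b) \<Rightarrow> okd ((gm \<circ> g) a) ((gm \<circ> g) b) \<and> pathvalid ((gm \<circ> g) a) ((gm \<circ> g) b) (stdP (gm \<circ> g) a b)"
    using ab by simp
qed

lemma pstep_Ib_Ost: "pathvalid A B Ib \<Longrightarrow> pathvalid A B Ost \<Longrightarrow> pstep A B Ib Ost"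
  unfolding pstep_def by (intro conjI exI[of _ t]) (auto simp: Ib_def Ost_def)

lemma pv_Ost: "okd A 0 \<Longrightarrow> okd 0 B \<Longrightarrow> pathvalid A B Ost"
  by (rule pv_cfg[OF cfg_Ost]) (auto simp: Ost_0 Ost_t)

lemma nbr:
  assumes "k_col k V E h" "h u = 0" "(u,b) \<in> E \<or> (b,u) \<in> E"
  shows "1 \<le> h b" "h b < k" "b \<noteq> u" "(u,b) \<in> E" "(b,u) \<in> E"
proof -
  have ub: "(u,b) \<in> E" using assms(3) symE unfolding sym_def by blast
  thus "(u,b) \<in> E" .
  show "(b,u) \<in> E" using ub symE unfolding sym_def by blast
  show "1 \<le> h b" "h b < k" using k_col_lt[OF assms(1) ub] assms(2) by auto
  show "b \<noteq> u" using ub irrE unfolding irrefl_def by auto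
qed

lemma core2:
  assumes kc: "k_col k V E h" and hu: "h u = 0" and c: "2 \<le> c" "c < k"
    and nb: "\<forall>b. (u,b) \<in> E \<longrightarrow> h b \<noteq> c"
  shows "step\<^sup>*\<^sup>* (col (gm \<circ> h) (stdP (gm \<circ> h))) (col ((gm \<circ> h)(u := gm c)) (stdP ((gm \<circ> h)(u := gm c))))"
proof -
  let ?o0 = "gm \<circ> h" and ?o1 = "(gm \<circ> h)(u := gm c)"
  have v0: "valid ?o0 (stdP ?o0)" by (rule std_valid[OF kc])
  have gc0: "gm c \<noteq> 0" using c gam_eq0 by simp
  have v1: "valid ?o1 (stdP ?o0)"
  proof (rule valid_change_u[OF v0 gam_lt[OF c(2)]], safe)
    fix b assume ub: "(u,b) \<in> E"
    note n = nbr[OF kc hu disjI1[OF ub]]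
    have hc: "h b \<noteq> c" using nb ub by auto
    show "okd (gm c) (?o0 b)" using okd_gam c n hc by simp
    show "pathvalid (gm c) (?o0 b) (stdP ?o0 u b)" unfolding stdP_def using hu
      by (simp, intro pv_cfg[OF cfg_O0]) (use okL2 c okL1 n O0_0 O0_t okL1s okL2s in auto)
  next
    fix a assume au: "(a,u) \<in> E"
    note n = nbr[OF kc hu disjI2[OF au]]
    have hc: "h a \<noteq> c" using nb n by auto
    show "okd (?o0 a) (gm c)" using okd_gam c n hc by simp
    show "pathvalid (?o0 a) (gm c) (stdP ?o0 a u)" unfolding stdP_def using hu n gam_eq0
      by (simp, intro pv_cfg[OF cfg_Ib]) (use okL2 c okL1 n Ib_0 Ib_t okL1s okL2s in auto)
  qed
  have s1: "step (col ?o0 (stdP ?o0)) (col ?o1 (stdP ?o0))" by (rule ustep[OF v0 v1])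
  have s2: "step\<^sup>*\<^sup>* (col ?o1 (stdP ?o0)) (col ?o1 (stdP ?o1)) \<and> valid ?o1 (stdP ?o1)"
  proof (rule phaseU[OF v1], safe)
    fix a b assume "(a,b) \<in> E" "a \<noteq> u" "b \<noteq> u"
    thus "stdP ?o1 a b = stdP ?o0 a b" unfolding stdP_def by simp
  next
    fix b assume ub: "(u,b) \<in> E"
    note n = nbr[OF kc hu disjI1[OF ub]]
    have eq: "stdP ?o1 u b = Ost" "stdP ?o0 u b = O0" "?o1 u = gm c" "?o1 b = gm (h b)"
      unfolding stdP_def using gc0 n gam_eq0 hu by auto
    show "pathvalid (?o1 u) (?o1 b) (stdP ?o1 u b)" unfolding eq
      by (rule pv_Ost) (use okL1 c n okL1s okL2s in auto)
    show "(pstep (?o1 u) (?o1 b))\<^sup>*\<^sup>* (stdP ?o0 u b) (stdP ?o1 u b)" unfolding eq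
      by (rule mix_cfg[OF cfg_Ost cfg_O0]) (use okL1 okL2 okL1s okL2s c n Ost_0 Ost_t O0_0 O0_t q0 p_big r_lt in auto)
  next
    fix a assume au: "(a,u) \<in> E"
    note n = nbr[OF kc hu disjI2[OF au]]
    have eq: "stdP ?o1 a u = Ost" "stdP ?o0 a u = Ib" "?o1 u = gm c" "?o1 a = gm (h a)"
      unfolding stdP_def using gc0 n gam_eq0 hu by auto
    have pO: "pathvalid (gm (h a)) (gm c) Ost" by (rule pv_Ost) (use okL1 c n okL1s okL2s in auto)
    have pI: "pathvalid (gm (h a)) (gm c) Ib"
      by (rule pv_cfg[OF cfg_Ib]) (use okL2 c okL1 n Ib_0 Ib_t okL1s okL2s in auto)
    show "pathvalid (?o1 a) (?o1 u) (stdP ?o1 a u)" unfolding eq by (rule pO)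
    show "(pstep (?o1 a) (?o1 u))\<^sup>*\<^sup>* (stdP ?o0 a u) (stdP ?o1 a u)" unfolding eq
      using pstep_Ib_Ost[OF pI pO] by auto
  qed
  show ?thesis using s1 s2 by (meson converse_rtranclp_into_rtranclp)
qed

lemma pv_Ic:
  assumes "X < p" "cg (int X) (int t * int q + eX)" "int q - int r - 1 \<le> eX" "eX \<le> int p - int q - int r - 1"
    "cg (int X) d" "-1 \<le> d" "d \<le> 2 * int q - 1" "okd A 0" "okd X B"
  shows "pathvalid A B (Ic X)"
  by (rule pv_cfg[OF cfg_Ic[OF assms(1-7)]]) (use assms(8,9) Ic_0 Ic_t in auto)

lemma I1v: "okd A 0 \<Longrightarrow> okd q B \<Longrightarrow> pathvalid A B (Ic q)"
  by (rule pv_Ic[where eX = "2 * int q - int r" and d = "int q"])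
     (use p_big r_lt q0 in \<open>auto intro: cg_lin[where c = "-1" and d = 0] simp: algebra_simps\<close>)

lemma I2v: "okd A 0 \<Longrightarrow> okd (2 * q - 1) B \<Longrightarrow> pathvalid A B (Ic (2 * q - 1))"
  by (rule pv_Ic[where eX = "3 * int q - int r - 1" and d = "2 * int q - 1"])
     (use p_big r_lt q0 in \<open>auto intro: cg_lin[where c = "-1" and d = 0] simp: algebra_simps of_nat_diff\<close>)

lemma I3v: "okd A 0 \<Longrightarrow> okd (p - 1) B \<Longrightarrow> pathvalid A B (Ic (p - 1))"
  by (rule pv_Ic[where eX = "int q - int r - 1" and d = "-1"])
     (use p_big r_lt q0 in \<open>auto intro: cg_lin[where c = "-1" and d = 1] cg_lin[where c = 0 and d = 1] simp: algebra_simps of_nat_diff\<close>)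

lemma I4v: "okd A 0 \<Longrightarrow> okd 0 B \<Longrightarrow> pathvalid A B (Ic 0)"
  by (rule pv_Ic[where eX = "int q - int r" and d = 0])
     (use p_big r_lt q0 in \<open>auto intro: cg_lin[where c = "-1" and d = 0] simp: algebra_simps\<close>)

lemma pstep_Ib_I1: "pathvalid A B Ib \<Longrightarrow> pathvalid A B (Ic q) \<Longrightarrow> pstep A B Ib (Ic q)"
  unfolding pstep_def by (intro conjI exI[of _ "t - 1"]) (auto simp: Ib_def Ic_def)

lemma pstep_Ic: "pathvalid A B (Ic X) \<Longrightarrow> pathvalid A B (Ic Y) \<Longrightarrow> pstep A B (Ic X) (Ic Y)"
  unfolding pstep_def by (intro conjI exI[of _ t]) (auto simp: Ic_def)

lemma pstep_I4_Ost: "pathvalid A B (Ic 0) \<Longrightarrow> pathvalid A B Ost \<Longrightarrow> pstep A B (Ic 0) Ost"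
  unfolding pstep_def by (intro conjI exI[of _ "t - 1"]) (auto simp: Ost_def Ic_def)

lemma pstep_O2_Ost: "pathvalid A B O2 \<Longrightarrow> pathvalid A B Ost \<Longrightarrow> pstep A B O2 Ost"
  unfolding pstep_def by (intro conjI exI[of _ 0]) (auto simp: O2_def)

lemma core1:
  assumes kc: "k_col k V E h" and hu: "h u = 0"
    and nb: "\<forall>b. (u,b) \<in> E \<longrightarrow> h b \<noteq> 1"
  shows "step\<^sup>*\<^sup>* (col (gm \<circ> h) (stdP (gm \<circ> h))) (col ((gm \<circ> h)(u := gm 1)) (stdP ((gm \<circ> h)(u := gm 1))))"
proof -
  let ?o0 = "gm \<circ> h"
  let ?o1 = "(gm \<circ> h)(u := q - 1)"
  let ?o2 = "(gm \<circ> h)(u := gm 1)"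
  let ?P0 = "stdP ?o0"
  let ?Pa = "\<lambda>a b. if a = u then O1 else if b = u then Ic (2 * q - 1) else ?P0 a b"
  let ?Pb = "\<lambda>a b. if a = u then O2 else if b = u then Ic (p - 1) else ?P0 a b"
  have g1: "gm 1 = q + r" by (simp add: gamS)
  have nbj: "2 \<le> h b \<and> h b < k \<and> b \<noteq> u" if "(u,b) \<in> E \<or> (b,u) \<in> E" for b
  proof -
    note n = nbr[OF kc hu that]
    have "h b \<noteq> 1" using nb n by auto
    thus ?thesis using n by auto
  qed
  have okj: "okd (gm (h b)) s" "okd s (gm (h b))" if "(u,b) \<in> E \<or> (b,u) \<in> E" "s \<le> q + r" for b s
    using okL2 okL2s nbj[OF that(1)] that(2) by blast+
  have okj0: "okd (gm (h b)) 0" "okd 0 (gm (h b))" if "(u,b) \<in> E \<or> (b,u) \<in> E" for b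
    using okj[OF that] by auto
  have okjr: "okd (r + q - 1) (gm (h b))" if "(u,b) \<in> E \<or> (b,u) \<in> E" for b
    using okj[OF that] by auto
  have okj1: "okd (gm (h b)) (gm 1)" "okd (gm 1) (gm (h b))" if "(u,b) \<in> E \<or> (b,u) \<in> E" for b
    using okd_gam[of 1 "h b"] okd_gam[of "h b" 1] nbj[OF that] k4 by auto
  have okq1: "okd (gm (h b)) (q - 1)" "okd (q - 1) (gm (h b))" if "(u,b) \<in> E \<or> (b,u) \<in> E" for b
    using okj[OF that] by auto
  have ok01: "okd 0 (gm 1)" using okd_gam[of 0 1] k4 by auto
  have v0: "valid ?o0 ?P0" by (rule std_valid[OF kc])
  have sA: "step\<^sup>*\<^sup>* (col ?o0 ?P0) (col ?o0 ?Pa) \<and> valid ?o0 ?Pa"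
  proof (rule phaseU[OF v0], safe)
    fix b assume ub: "(u,b) \<in> E"
    have X1: "pathvalid 0 (gm (h b)) O1"
      by (rule pv_cfg[OF cfg_O1]) (use okjr[of b] ub O1_0 O1_t oks in auto)
    have "(pstep 0 (gm (h b)))\<^sup>*\<^sup>* O1 O0"
      by (rule mix_cfg[OF cfg_O0 cfg_O1]) (use okjr[of b] okj[of b] ub O1_0 O1_t O0_0 O0_t q0 p_big oks in auto)
    hence X2: "(pstep 0 (gm (h b)))\<^sup>*\<^sup>* O0 O1" by (rule psteps_sym)
    show "pathvalid (?o0 u) (?o0 b) (?Pa u b)" using X1 hu by simp
    show "(pstep (?o0 u) (?o0 b))\<^sup>*\<^sup>* (?P0 u b) (?Pa u b)" using X2 hu by (simp add: stdP_def)
  next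
    fix a assume au: "(a,u) \<in> E"
    have au': "a \<noteq> u" using nbj au by blast
    have ha: "gm (h a) \<noteq> 0" using nbj[of a] au gam_eq0 by auto
    have ok0: "okd (gm (h a)) 0" using okj0[of a] au by auto
    have p1: "pathvalid (gm (h a)) 0 (Ic q)" by (rule I1v[OF ok0]) (use oks in auto)
    have p2: "pathvalid (gm (h a)) 0 (Ic (2 * q - 1))" by (rule I2v[OF ok0]) (use oks in auto)
    have p0: "pathvalid (gm (h a)) 0 Ib"
      by (rule pv_cfg[OF cfg_Ib]) (use ok0 Ib_0 Ib_t oks in auto)
    have X2: "(pstep (gm (h a)) 0)\<^sup>*\<^sup>* Ib (Ic (2 * q - 1))"
      using pstep_Ib_I1[OF p0 p1] pstep_Ic[OF p1 p2] by (meson r_into_rtranclp rtranclp.rtrancl_into_rtrancl)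
    show "pathvalid (?o0 a) (?o0 u) (?Pa a u)" using p2 au' hu by simp
    show "(pstep (?o0 a) (?o0 u))\<^sup>*\<^sup>* (?P0 a u) (?Pa a u)" using X2 au' hu ha by (simp add: stdP_def)
  qed (auto simp: stdP_def)
  have vA1: "valid ?o1 ?Pa"
  proof (rule valid_change_u[OF conjunct2[OF sA]], safe)
    show "q - 1 < p" using p_big by simp
    fix b assume ub: "(u,b) \<in> E"
    have bu: "b \<noteq> u" using nbj ub by blast
    show "okd (q - 1) (?o0 b)" using okq1[of b] ub by auto
    have X: "pathvalid (q - 1) (gm (h b)) O1"
      by (rule pv_cfg[OF cfg_O1]) (use okjr[of b] ub O1_0 O1_t oks in auto)
    thus "pathvalid (q - 1) (?o0 b) (?Pa u b)" by simp
  next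
    fix a assume au: "(a,u) \<in> E"
    have au': "a \<noteq> u" using nbj au by blast
    have ok0: "okd (gm (h a)) 0" using okj0[of a] au by auto
    show "okd (?o0 a) (q - 1)" using okq1[of a] au by auto
    have X: "pathvalid (gm (h a)) (q - 1) (Ic (2 * q - 1))" by (rule I2v[OF ok0]) (use oks in auto)
    thus "pathvalid (?o0 a) (q - 1) (?Pa a u)" using au' by simp
  qed
  have s1: "step (col ?o0 ?Pa) (col ?o1 ?Pa)" by (rule ustep[OF conjunct2[OF sA] vA1])
  have sB: "step\<^sup>*\<^sup>* (col ?o1 ?Pa) (col ?o1 ?Pb) \<and> valid ?o1 ?Pb"
  proof (rule phaseU[OF vA1], safe)
    fix b assume ub: "(u,b) \<in> E"
    have bu: "b \<noteq> u" using nbj ub by blast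
    have X1: "pathvalid (q - 1) (gm (h b)) O2"
      by (rule pv_cfg[OF cfg_O2]) (use okj0[of b] ub O2_0 O2_t oks in auto)
    have X2: "(pstep (q - 1) (gm (h b)))\<^sup>*\<^sup>* O1 O2"
      by (rule mix_cfg[OF cfg_O2 cfg_O1]) (use okjr[of b] okj0[of b] ub O1_0 O1_t O2_0 O2_t q0 p_big oks in auto)
    show "pathvalid (?o1 u) (?o1 b) (?Pb u b)" using X1 bu by simp
    show "(pstep (?o1 u) (?o1 b))\<^sup>*\<^sup>* (?Pa u b) (?Pb u b)" using X2 bu by simp
  next
    fix a assume au: "(a,u) \<in> E"
    have au': "a \<noteq> u" using nbj au by blast
    have ok0: "okd (gm (h a)) 0" using okj0[of a] au by auto
    have p2: "pathvalid (gm (h a)) (q - 1) (Ic (2 * q - 1))" by (rule I2v[OF ok0]) (use oks in auto)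
    have p3: "pathvalid (gm (h a)) (q - 1) (Ic (p - 1))" by (rule I3v[OF ok0]) (use oks in auto)
    show "pathvalid (?o1 a) (?o1 u) (?Pb a u)" using p3 au' by simp
    show "(pstep (?o1 a) (?o1 u))\<^sup>*\<^sup>* (?Pa a u) (?Pb a u)"
      using pstep_Ic[OF p2 p3] au' by simp
  qed auto
  have vB2': "valid (?o1(u := gm 1)) ?Pb"
    proof (rule valid_change_u[OF conjunct2[OF sB]], safe)
      show "gm 1 < p" using gam_lt k4 by simp
      fix b assume ub: "(u,b) \<in> E"
      have bu: "b \<noteq> u" using nbj ub by blast
      show "okd (gm 1) (?o1 b)" using bu okj1[of b] ub by auto
      have X: "pathvalid (gm 1) (gm (h b)) O2"
        by (rule pv_cfg[OF cfg_O2]) (use okj0[of b] ub O2_0 O2_t oks g1 in auto)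
      thus "pathvalid (gm 1) (?o1 b) (?Pb u b)" using bu by simp
    next
      fix a assume au: "(a,u) \<in> E"
      have au': "a \<noteq> u" using nbj au by blast
      have ok0: "okd (gm (h a)) 0" using okj0[of a] au by auto
      show "okd (?o1 a) (gm 1)" using au' okj1[of a] au by auto
      have X: "pathvalid (gm (h a)) (gm 1) (Ic (p - 1))" by (rule I3v[OF ok0]) (use oks g1 in auto)
      thus "pathvalid (?o1 a) (gm 1) (?Pb a u)" using au' by simp
    qed
  have vB2: "valid ?o2 ?Pb" using vB2' by simp
  have s2: "step (col ?o1 ?Pb) (col ?o2 ?Pb)" using ustep[OF conjunct2[OF sB] vB2'] by simp
  have sC: "step\<^sup>*\<^sup>* (col ?o2 ?Pb) (col ?o2 (stdP ?o2)) \<and> valid ?o2 (stdP ?o2)"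
  proof (rule phaseU[OF vB2], safe)
    fix a b assume "(a,b) \<in> E" "a \<noteq> u" "b \<noteq> u"
    thus "stdP ?o2 a b = ?Pb a b" unfolding stdP_def by simp
  next
    fix b assume ub: "(u,b) \<in> E"
    have bu: "b \<noteq> u" using nbj ub by blast
    have hb: "gm (h b) \<noteq> 0" "gm 1 \<noteq> 0" using nbj[of b] ub gam_eq0 by auto
    have pO: "pathvalid (gm 1) (gm (h b)) Ost" by (rule pv_Ost) (use okj0[of b] ub ok01 okd_sym in auto)
    have p2: "pathvalid (gm 1) (gm (h b)) O2"
      by (rule pv_cfg[OF cfg_O2]) (use okj0[of b] ub O2_0 O2_t oks g1 in auto)
    show "pathvalid (?o2 u) (?o2 b) (stdP ?o2 u b)" using pO bu hb by (simp add: stdP_def)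
    show "(pstep (?o2 u) (?o2 b))\<^sup>*\<^sup>* (?Pb u b) (stdP ?o2 u b)"
      using pstep_O2_Ost[OF p2 pO] bu hb by (simp add: stdP_def)
  next
    fix a assume au: "(a,u) \<in> E"
    have au': "a \<noteq> u" using nbj au by blast
    have ha: "gm (h a) \<noteq> 0" "gm 1 \<noteq> 0" using nbj[of a] au gam_eq0 by auto
    have ok0: "okd (gm (h a)) 0" using okj0[of a] au by auto
    have p3: "pathvalid (gm (h a)) (gm 1) (Ic (p - 1))"
      by (rule I3v[OF ok0]) (use oks g1 in auto)
    have p4: "pathvalid (gm (h a)) (gm 1) (Ic 0)" by (rule I4v[OF ok0 ok01])
    have pO: "pathvalid (gm (h a)) (gm 1) Ost" by (rule pv_Ost[OF ok0 ok01])
    have X: "(pstep (gm (h a)) (gm 1))\<^sup>*\<^sup>* (Ic (p - 1)) Ost"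
      using pstep_Ic[OF p3 p4] pstep_I4_Ost[OF p4 pO] by (meson r_into_rtranclp rtranclp.rtrancl_into_rtrancl)
    show "pathvalid (?o2 a) (?o2 u) (stdP ?o2 a u)" using pO au' ha by (simp add: stdP_def)
    show "(pstep (?o2 a) (?o2 u))\<^sup>*\<^sup>* (?Pb a u) (stdP ?o2 a u)" using X au' ha by (simp add: stdP_def)
  qed
  have "step\<^sup>*\<^sup>* (col ?o0 ?P0) (col ?o1 ?Pb)" using sA s1 sB by (meson rtranclp.rtrancl_into_rtrancl rtranclp_trans)
  hence "step\<^sup>*\<^sup>* (col ?o0 ?P0) (col ?o2 ?Pb)" using s2 by simp
  thus ?thesis using sC by (meson rtranclp_trans)
qed

lemma std_all:
  assumes "\<forall>(a,b)\<in>E. oc a \<noteq> 0 \<or> oc b \<noteq> 0"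
  shows "all_std p q E (col oc (stdP oc))"
  unfolding all_std_def
proof (safe)
  fix a b assume ab: "(a,b) \<in> E"
  show "std_path p q (col oc (stdP oc)) a b"
    unfolding std_path_def using assms ab by (auto simp: stdP_def O0_def Ib_def Ost_def)
qed

lemma eta_step:
  assumes pq: "pq_col p q V E \<eta>" and Y: "\<forall>i<p. \<eta> (Yv i) = i" and st: "all_std p q E \<eta>"
    and v: "valid oc (stdP oc)" and O: "\<forall>v\<in>V. \<eta> (Orig v) = oc v"
  shows "step \<eta> (col oc (stdP oc))"
proof (rule step_intro[OF pq valid_pq[OF v], where z = "Yv 0"], intro ballI impI)
  fix x assume x: "x \<in> Gvert p q V E"
  show "\<eta> x = col oc (stdP oc) x"
  proof (cases x)
    case (Orig v) thus ?thesis using x O unfolding Gvert_def by auto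
  next
    case (Yv i) thus ?thesis using x Y unfolding Gvert_def by auto
  next
    case (Xv a b i)
    have ab: "(a,b) \<in> E" "i \<le> t" using x Xv unfolding Gvert_def by auto
    have ab': "a \<in> V" "b \<in> V" using ab EV by auto
    have sp: "std_path p q \<eta> a b" using st ab unfolding all_std_def by auto
    have oa: "\<eta> (Orig a) = oc a" "\<eta> (Orig b) = oc b" using O ab' by auto
    show ?thesis using sp oa ab(2) unfolding Xv std_path_def
      by (cases "i < t") (auto simp: stdP_def O0_def Ib_def Ost_def)
  qed
qed

lemma valid_cong:
  assumes "\<forall>v\<in>V. oc v = oc' v" "valid oc' (stdP oc')"
  shows "valid oc (stdP oc)"
proof -
  have e: "(a,b) \<in> E \<Longrightarrow> oc a = oc' a \<and> oc b = oc' b" for a b using assms(1) EV by auto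
  have "(a,b) \<in> E \<Longrightarrow> stdP oc a b = stdP oc' a b" for a b using e[of a b] unfolding stdP_def by simp
  thus ?thesis using assms e unfolding valid_def by auto
qed

lemma core:
  assumes kc: "k_col k V E h" and kc': "k_col k V E h'" and u: "u \<in> V"
    and diff: "{v \<in> V. h v \<noteq> h' v} = {u}" and hu: "h u = 0"
  shows "step\<^sup>*\<^sup>* (col (gm \<circ> h) (stdP (gm \<circ> h))) (col ((gm \<circ> h)(u := gm (h' u))) (stdP ((gm \<circ> h)(u := gm (h' u)))))"
proof -
  have c: "h' u \<noteq> 0" "h' u < k" using diff hu kc' u unfolding k_col_def by auto
  have nb: "\<forall>b. (u,b) \<in> E \<longrightarrow> h b \<noteq> h' u"
  proof (intro allI impI)
    fix b assume ub: "(u,b) \<in> E"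
    have "b \<noteq> u" using ub irrE unfolding irrefl_def by auto
    moreover have "b \<in> V" using ub EV by auto
    ultimately have "h b = h' b" using diff by auto
    moreover have "h' u \<noteq> h' b" using kc' ub unfolding k_col_def by auto
    ultimately show "h b \<noteq> h' u" by simp
  qed
  show ?thesis
  proof (cases "h' u = 1")
    case True
    thus ?thesis using core1[OF kc hu] nb by simp
  next
    case False
    hence "2 \<le> h' u" using c by simp
    thus ?thesis using core2[OF kc hu _ c(2) nb] by simp
  qed
qed

lemma main:
  assumes kc: "k_col k V E h" and kc': "k_col k V E h'" and u: "u \<in> V"
    and diff: "{v \<in> V. h v \<noteq> h' v} = {u}"
    and pq: "pq_col p q V E \<eta>" and Y: "\<forall>i<p. \<eta> (Yv i) = i"
    and O: "\<forall>v\<in>V. \<eta> (Orig v) = gm (h v)" and st: "all_std p q E \<eta>"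
  shows "\<exists>\<eta>'. pq_col p q V E \<eta>' \<and> all_std p q E \<eta>' \<and>
           (\<forall>v \<in> V. \<eta>' (Orig v) = gm (h' v)) \<and> reconf p q V E \<eta> \<eta>'"
proof -
  have hv: "\<forall>v\<in>V. v \<noteq> u \<longrightarrow> h v = h' v" using diff by auto
  have nz: "\<forall>(a,b)\<in>E. oc a \<noteq> 0 \<or> oc b \<noteq> 0" if ocv: "\<forall>v\<in>V. oc v = gm (h' v)" for oc
  proof -
    have "oc a \<noteq> 0 \<or> oc b \<noteq> 0" if ab: "(a,b) \<in> E" for a b
    proof (rule ccontr)
      assume "\<not> (oc a \<noteq> 0 \<or> oc b \<noteq> 0)"
      hence z: "oc a = 0" "oc b = 0" by auto
      have "a \<in> V" "b \<in> V" using ab EV by auto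
      hence "gm (h' a) = 0" "gm (h' b) = 0" using ocv z by auto
      hence "h' a = 0" "h' b = 0" using gam_eq0 by auto
      thus False using kc' ab unfolding k_col_def by auto
    qed
    thus ?thesis by blast
  qed
  have "\<exists>oc. (\<forall>v\<in>V. oc v = gm (h' v)) \<and> step\<^sup>*\<^sup>* \<eta> (col oc (stdP oc))"
  proof (cases "h u = 0")
    case True
    let ?oc = "(gm \<circ> h)(u := gm (h' u))"
    have s0: "step \<eta> (col (gm \<circ> h) (stdP (gm \<circ> h)))"
      by (rule eta_step[OF pq Y st std_valid[OF kc]]) (use O in auto)
    have A: "step\<^sup>*\<^sup>* \<eta> (col ?oc (stdP ?oc))" using s0 core[OF kc kc' u diff True] by simp
    have B: "\<forall>v\<in>V. ?oc v = gm (h' v)" using hv by auto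
    show ?thesis apply (rule exI[of _ ?oc]) apply (rule conjI) apply (rule B) apply (rule A) done
  next
    case F: False
    show ?thesis
    proof (cases "h' u = 0")
      case True
      let ?oc = "(gm \<circ> h')(u := gm (h u))"
      have "{v \<in> V. h' v \<noteq> h v} = {v \<in> V. h v \<noteq> h' v}" by (rule Collect_cong) auto
      hence diff': "{v \<in> V. h' v \<noteq> h v} = {u}" using diff by simp
      have s1: "step\<^sup>*\<^sup>* (col (gm \<circ> h') (stdP (gm \<circ> h'))) (col ?oc (stdP ?oc))"
        using core[OF kc' kc u diff' True] by simp
      have vo: "valid ?oc (stdP ?oc)"
        by (rule valid_cong[OF _ std_valid[OF kc]]) (use hv in auto)
      have s0: "step \<eta> (col ?oc (stdP ?oc))"
        by (rule eta_step[OF pq Y st vo]) (use O hv in auto)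
      have "step\<^sup>*\<^sup>* (col ?oc (stdP ?oc)) (col (gm \<circ> h') (stdP (gm \<circ> h')))"
        using rtranclp_sym[OF step_sym s1] .
      hence "step\<^sup>*\<^sup>* \<eta> (col (gm \<circ> h') (stdP (gm \<circ> h')))" using s0 by (meson converse_rtranclp_into_rtranclp)
      moreover have "\<forall>v\<in>V. (gm \<circ> h') v = gm (h' v)" by simp
      ultimately show ?thesis by (intro exI[of _ "gm \<circ> h'"] conjI)
    next
      case F': False
      have s0: "step \<eta> (col (gm \<circ> h) (stdP (gm \<circ> h)))"
        by (rule eta_step[OF pq Y st std_valid[OF kc]]) (use O in auto)
      have s1: "step (col (gm \<circ> h) (stdP (gm \<circ> h))) (col (gm \<circ> h') (stdP (gm \<circ> h')))"
      proof (rule step_intro[OF valid_pq[OF std_valid[OF kc]] valid_pq[OF std_valid[OF kc']], where z = "Orig u"], intro ballI impI)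
        fix x assume x: "x \<in> Gvert p q V E" "x \<noteq> Orig u"
        show "col (gm \<circ> h) (stdP (gm \<circ> h)) x = col (gm \<circ> h') (stdP (gm \<circ> h')) x"
        proof (cases x)
          case (Orig v) thus ?thesis using x hv unfolding Gvert_def by auto
        next
          case (Yv i) thus ?thesis by simp
        next
          case (Xv a b i)
          have ab: "(a,b) \<in> E" using x Xv unfolding Gvert_def by auto
          have ab': "a \<in> V" "b \<in> V" using ab EV by auto
          have zz: "v \<in> V \<Longrightarrow> (h v = 0) = (h' v = 0)" for v using hv F F' by (cases "v = u") auto
          have z: "(h a = 0) = (h' a = 0)" "(h b = 0) = (h' b = 0)" using zz ab' by auto
          thus ?thesis unfolding Xv using gam_eq0 by (simp add: stdP_def)
        qed
      qed
      have "step\<^sup>*\<^sup>* \<eta> (col (gm \<circ> h') (stdP (gm \<circ> h')))" using s0 s1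
        by (meson r_into_rtranclp converse_rtranclp_into_rtranclp)
      moreover have "\<forall>v\<in>V. (gm \<circ> h') v = gm (h' v)" by simp
      ultimately show ?thesis by (intro exI[of _ "gm \<circ> h'"] conjI)
    qed
  qed
  then obtain oc where oc: "\<forall>v\<in>V. oc v = gm (h' v)" "step\<^sup>*\<^sup>* \<eta> (col oc (stdP oc))" by blast
  show ?thesis
  proof (intro exI[of _ "col oc (stdP oc)"] conjI)
    show "pq_col p q V E (col oc (stdP oc))" by (rule steps_pq[OF oc(2) pq])
    show "all_std p q E (col oc (stdP oc))" by (rule std_all[OF nz[OF oc(1)]])
    show "\<forall>v\<in>V. col oc (stdP oc) (Orig v) = gm (h' v)" using oc(1) by simp
    show "reconf p q V E \<eta> (col oc (stdP oc))" by (rule steps_reconf[OF oc(2) pq])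
  qed
qed

end

theorem lemma3p4:
  fixes p q :: nat and V :: "'v set" and E :: "('v \<times> 'v) set"
    and h h' :: "'v \<Rightarrow> nat" and u :: 'v and \<eta> :: "'v gvert \<Rightarrow> nat"
  assumes "0 < q" and "4 * q \<le> p"
    and "1 \<le> rpar p q"
    and "finite V" and "E \<subseteq> V \<times> V" and "sym E" and "irrefl E"
    and "k_col (kpar p q) V E h" and "k_col (kpar p q) V E h'"
    and "u \<in> V" and "{v \<in> V. h v \<noteq> h' v} = {u}"
    and "pq_col p q V E \<eta>"
    and "\<forall>i < p. \<eta> (Yv i) = i"
    and "\<forall>v \<in> V. \<eta> (Orig v) = gam p q (h v)"
    and "all_std p q E \<eta>"
  shows "\<exists>\<eta>'. pq_col p q V E \<eta>' \<and> all_std p q E \<eta>' \<and>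
           (\<forall>v \<in> V. \<eta>' (Orig v) = gam p q (h' v)) \<and> reconf p q V E \<eta> \<eta>'"
proof -
  interpret L p q V E by unfold_locales (use assms(1-7) in auto)
  show ?thesis by (rule main[OF assms(8-15)])
qed

end
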